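(* Let $S,I:\mathbb{R}\to\mathbb{R}$ be $2\pi$-periodic Lipschitz functions and suppose there are $\alpha_0\in(0,\pi)$, $p,q\ge1$, $c_1,c_2>0$, $c_3\in(0,1]$ with $S(\theta)\le-c_1(\pi-\theta)^p$ for $\theta\in[\alpha_0,\pi]$, $S(\theta)\ge c_1(\theta+\pi)^p$ for $\theta\in[-\pi,-\alpha_0]$, $0\le I(\theta)\le c_2(\pi-|\theta|)^q$ for $\theta\in[-\pi,\pi]$, and $\min_{|\phi|\le\max\{|\theta|,\alpha_0\}}I(\phi)\ge c_3I(\theta)$ for $\theta\in[-\pi,\pi]$. Let $(\theta_i(t))$ solve $\dot\theta_i=\omega_i+\frac{\kappa}{N}\sum_{j=1}^NI(\theta_j)S(\theta_i)$, $\theta_i(0)=\theta_i^0$, and $R(t)=\frac1N\sum_jI(\theta_j(t))$. For $\mathcal B\subseteq\{1,\dots,N\}$ let $\|\Omega_{\mathcal B}\|_\infty=\max_{i\in\mathcal B}|\omega_i|$. Suppose $0<\rho\le\|I\|_{\sup}$ and $\mathcal A\subset\mathcal B\subset\{1,\dots,N\}$ satisfy \[ \frac1N\sum_{i\in\mathcal A}I(\theta_i^0)>\frac{\rho}{c_3},\qquad\kappa>\frac{\|\Omega_{\mathcal B}\|_\infty}{\rho c_1(\pi-\alpha_0)^p}, \] and, with $d=\left(\frac{\|\Omega_{\mathcal B}\|_\infty}{\kappa\rho c_1}\right)^{1/p}$, $\theta_i^0\in[-\pi+d,\pi-d]$ for all $i\in\mathcal A$. Then (a) $R(t)>\rho$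 for $t\ge0$; (b) $\theta_i(t)\in[-\pi+d,\pi-d]$ for $i\in\mathcal A$ and $t\ge0$; (c) $\sup_{t\ge0}\theta_i(t)-\inf_{t\ge0}\theta_i(t)<2\pi$ for $i\in\mathcal B$.
   Context: $\|I\|_{\sup}=\sup|I|$. *)

theory Defs
  imports "HOL-Analysis.Analysis"
begin

end

theory Submission
  imports Defs
begin

lemma gronwall_barrier:
  fixes f f' :: "real \<Rightarrow> real"
  assumes der: "\<And>t. t0 \<le> t \<Longrightarrow> t \<le> t2 \<Longrightarrow> (f has_real_derivative f' t) (at t within {t0..t2})"
    and C: "C \<ge> 0"
    and cond: "\<And>t. t0 \<le> t \<Longrightarrow> t \<le> t2 \<Longrightarrow> f t \<ge> c \<Longrightarrow> f' t \<le> C * (f t - c)"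
    and init: "f t0 \<le> c"
    and t: "t0 \<le> t" "t \<le> t2"
  shows "f t \<le> c"
proof (rule ccontr)
  assume "\<not> f t \<le> c"
  hence ft: "f t > c" by simp
  have cont: "continuous_on {t0..t2} f"
    using der by (metis DERIV_continuous atLeastAtMost_iff continuous_on_eq_continuous_within)
  define K where "K = {t0..t} \<inter> f -` {..c}"
  have "continuous_on {t0..t} f" using cont by (rule continuous_on_subset) (use t in auto)
  hence "closed K" unfolding K_def
    by (intro continuous_closed_preimage) auto
  moreover have "t0 \<in> K" using init t by (auto simp: K_def)
  moreover have bdd: "bdd_above K" by (auto simp: K_def bdd_above_def)
  ultimately have sK: "Sup K \<in> K" using closed_contains_Sup by blast
  define s where "s = Sup K"
  have s: "t0 \<le> s" "s \<le> t" "f s \<le> c" using sK by (auto simp: s_def K_def)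
  have st: "s < t" using s ft by (metis order.not_eq_order_implies_strict not_le)
  have above: "f u > c" if "s < u" "u \<le> t" for u
  proof (rule ccontr)
    assume "\<not> c < f u"
    hence "u \<in> K" using that s by (auto simp: K_def)
    hence "u \<le> s" unfolding s_def using bdd by (rule cSup_upper)
    thus False using that by simp
  qed
  define v where "v x = (f x - c) * exp (- C * x)" for x
  define v' where "v' x = f' x * exp (- C * x) + (f x - c) * (- C * exp (- C * x))" for x
  have dv: "(v has_real_derivative v' x) (at x within {s..t})" if "s \<le> x" "x \<le> t" for x
  proof -
    have "(f has_real_derivative f' x) (at x within {s..t})"
      using der[of x] that s t by (auto intro: DERIV_subset)
    then show ?thesis unfolding v_def v'_def
      by (auto intro!: derivative_eq_intros)
  qed
  have "\<exists>z\<in>{s<..<t}. v t - v s = v' z * (t - s)"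
  proof -
    have "(v has_derivative (\<lambda>h. v' x * h)) (at x within {s..t})" if "s \<le> x" "x \<le> t" for x
      using dv[OF that] by (simp add: has_field_derivative_def)
    then have "\<exists>z\<in>{s<..<t}. v t - v s = v' z * (t - s)"
      by (intro mvt_simple[OF st, of v "\<lambda>x h. v' x * h"]) auto
    then show ?thesis .
  qed
  then obtain z where z: "z \<in> {s<..<t}" "v t - v s = v' z * (t - s)" by blast
  have "f z > c" using above z by auto
  hence "f' z \<le> C * (f z - c)" using cond[of z] z s t by auto
  moreover have "v' z = (f' z - C * (f z - c)) * exp (- C * z)" by (simp add: v'_def algebra_simps)
  ultimately have "v' z \<le> 0" by (simp add: mult_nonpos_nonneg)
  hence "v' z * (t - s) \<le> 0" using st by (simp add: mult_nonpos_nonneg)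
  hence "v t \<le> v s" using z by simp
  moreover have "v s \<le> 0" using s by (simp add: v_def mult_nonpos_nonneg)
  moreover have "v t > 0" using ft by (simp add: v_def)
  ultimately show False by simp
qed


lemma gronwall_barrier_below:
  fixes f f' :: "real \<Rightarrow> real"
  assumes der: "\<And>t. t0 \<le> t \<Longrightarrow> t \<le> t2 \<Longrightarrow> (f has_real_derivative f' t) (at t within {t0..t2})"
    and C: "C \<ge> 0"
    and cond: "\<And>t. t0 \<le> t \<Longrightarrow> t \<le> t2 \<Longrightarrow> f t \<le> c \<Longrightarrow> f' t \<ge> C * (f t - c)"
    and init: "f t0 \<ge> c"
    and t: "t0 \<le> t" "t \<le> t2"
  shows "f t \<ge> c"
proof -
  have "- f t \<le> - c"
  proof (rule gronwall_barrier[where f="\<lambda>x. - f x" and f'="\<lambda>x. - f' x", OF _ C _ _ t])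
    show "((\<lambda>x. - f x) has_real_derivative - f' x) (at x within {t0..t2})" if "t0 \<le> x" "x \<le> t2" for x
      using der[OF that] by (rule DERIV_minus)
    show "- f' x \<le> C * (- f x - - c)" if "t0 \<le> x" "x \<le> t2" "- c \<le> - f x" for x
      using cond[of x] that by (simp add: algebra_simps)
  qed (use init in simp)
  then show ?thesis by simp
qed

lemma periodic_int:
  fixes f :: "real \<Rightarrow> real"
  assumes per: "\<And>x. f (x + 2 * pi) = f x"
  shows "f (x + 2 * pi * of_int k) = f x"
proof -
  have nat: "f (y + 2 * pi * real n) = f y" for y n
  proof (induction n)
    case (Suc n)
    have "y + 2 * pi * real (Suc n) = (y + 2 * pi * real n) + 2 * pi" by (simp add: algebra_simps)
    then show ?case using per[of "y + 2 * pi * real n"] Suc by (simp only:)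
  qed simp
  show ?thesis
  proof (cases "k \<ge> 0")
    case True
    then have "k = int (nat k)" by simp
    then obtain n where "k = int n" by blast
    then show ?thesis using nat by simp
  next
    case False
    define n where "n = nat (- k)"
    have k: "k = - int n" using False by (simp add: n_def)
    have "f (x + 2 * pi * of_int k) = f ((x + 2 * pi * of_int k) + 2 * pi * real n)" using nat by simp
    also have "\<dots> = f x" using k by simp
    finally show ?thesis .
  qed
qed

lemma periodic_reduce:
  fixes f :: "real \<Rightarrow> real"
  assumes per: "\<And>x. f (x + 2 * pi) = f x"
  shows "\<exists>y. - pi \<le> y \<and> y \<le> pi \<and> f x = f y"
proof -
  define k where "k = \<lfloor>(x + pi) / (2 * pi)\<rfloor>"
  have k: "of_int k \<le> (x + pi) / (2 * pi)" "(x + pi) / (2 * pi) < of_int k + 1"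
    using floor_correct[of "(x + pi) / (2 * pi)"] unfolding k_def by auto
  have k1: "of_int k * (2 * pi) \<le> x + pi" using k(1) pi_gt_zero by (simp only: pos_le_divide_eq)
  have k2: "x + pi < (of_int k + 1) * (2 * pi)" using k(2) pi_gt_zero by (simp only: pos_divide_less_eq)
  define y where "y = x + 2 * pi * of_int (- k)"
  have "f y = f x" unfolding y_def by (rule periodic_int[of f, OF per])
  moreover have "- pi \<le> y" "y \<le> pi" using k1 k2 by (simp_all add: y_def algebra_simps)
  ultimately show ?thesis by auto
qed

theorem proposition2p19:
  fixes S I :: "real \<Rightarrow> real"
    and \<alpha>0 p q c1 c2 c3 \<kappa> \<rho> :: real
    and N :: nat
    and \<omega> \<theta>0 :: "nat \<Rightarrow> real"
    and \<theta> :: "nat \<Rightarrow> real \<Rightarrow> real"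
    and A B :: "nat set"
  assumes S_per: "\<And>x. S (x + 2 * pi) = S x"
    and I_per: "\<And>x. I (x + 2 * pi) = I x"
    and S_lip: "\<exists>L. L-lipschitz_on UNIV S"
    and I_lip: "\<exists>L. L-lipschitz_on UNIV I"
    and \<alpha>0: "0 < \<alpha>0" "\<alpha>0 < pi"
    and pq: "p \<ge> 1" "q \<ge> 1"
    and cs: "c1 > 0" "c2 > 0" "0 < c3" "c3 \<le> 1"
    and S_right: "\<And>x. \<alpha>0 \<le> x \<Longrightarrow> x \<le> pi \<Longrightarrow> S x \<le> - c1 * (pi - x) powr p"
    and S_left: "\<And>x. - pi \<le> x \<Longrightarrow> x \<le> - \<alpha>0 \<Longrightarrow> S x \<ge> c1 * (x + pi) powr p"
    and I_bounds: "\<And>x. - pi \<le> x \<Longrightarrow> x \<le> pi \<Longrightarrow>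
                     0 \<le> I x \<and> I x \<le> c2 * (pi - \<bar>x\<bar>) powr q"
    and I_min: "\<And>x \<phi>. - pi \<le> x \<Longrightarrow> x \<le> pi \<Longrightarrow>
                     \<bar>\<phi>\<bar> \<le> max \<bar>x\<bar> \<alpha>0 \<Longrightarrow> I \<phi> \<ge> c3 * I x"
    and ode: "\<And>i t. i \<in> {1..N} \<Longrightarrow> t \<ge> 0 \<Longrightarrow>
               (\<theta> i has_real_derivative
                  (\<omega> i + \<kappa> / real N * (\<Sum>j\<in>{1..N}. I (\<theta> j t)) * S (\<theta> i t)))
               (at t within {0..})"
    and init: "\<And>i. i \<in> {1..N} \<Longrightarrow> \<theta> i 0 = \<theta>0 i"
    and \<rho>: "0 < \<rho>" "\<rho> \<le> (SUP x. \<bar>I x\<bar>)"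
    and AB: "A \<subseteq> B" "B \<subseteq> {1..N}"
    and A_mass: "(1 / real N) * (\<Sum>i\<in>A. I (\<theta>0 i)) > \<rho> / c3"
    and \<kappa>: "\<kappa> > Max ((\<lambda>i. \<bar>\<omega> i\<bar>) ` B) / (\<rho> * c1 * (pi - \<alpha>0) powr p)"
    and A_init: "\<And>i. i \<in> A \<Longrightarrow>
        - pi + (Max ((\<lambda>i. \<bar>\<omega> i\<bar>) ` B) / (\<kappa> * \<rho> * c1)) powr (1 / p) \<le> \<theta>0 i \<and>
        \<theta>0 i \<le> pi - (Max ((\<lambda>i. \<bar>\<omega> i\<bar>) ` B) / (\<kappa> * \<rho> * c1)) powr (1 / p)"
  shows "(\<forall>t\<ge>0. (1 / real N) * (\<Sum>j\<in>{1..N}. I (\<theta> j t)) > \<rho>)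
       \<and> (\<forall>i\<in>A. \<forall>t\<ge>0.
            - pi + (Max ((\<lambda>i. \<bar>\<omega> i\<bar>) ` B) / (\<kappa> * \<rho> * c1)) powr (1 / p) \<le> \<theta> i t \<and>
            \<theta> i t \<le> pi - (Max ((\<lambda>i. \<bar>\<omega> i\<bar>) ` B) / (\<kappa> * \<rho> * c1)) powr (1 / p))
       \<and> (\<forall>i\<in>B. bdd_above (\<theta> i ` {0..}) \<and> bdd_below (\<theta> i ` {0..}) \<and>
            (SUP t\<in>{0..}. \<theta> i t) - (INF t\<in>{0..}. \<theta> i t) < 2 * pi)"
  proof -
  obtain LS where LS: "LS-lipschitz_on UNIV S" using S_lip by blast
  have LS0: "0 \<le> LS" using LS by (rule lipschitz_on_nonneg)
  have Slip: "\<bar>S x - S y\<bar> \<le> LS * \<bar>x - y\<bar>" for x y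
    using lipschitz_onD[OF LS, of x y] by (simp add: dist_real_def)
  obtain LI where LI: "LI-lipschitz_on UNIV I" using I_lip by blast
  have Icont: "continuous_on UNIV I" using LI by (rule lipschitz_on_continuous_on)
  have Sper: "S (x + 2 * pi * of_int k) = S x" for x k
    by (rule periodic_int[of S, OF S_per])
  have I0: "0 \<le> I x" for x
  proof -
    obtain y where y: "- pi \<le> y" "y \<le> pi" "I x = I y" using periodic_reduce[of I, OF I_per, of x] by blast
    then show ?thesis using I_bounds[OF y(1,2)] by simp
  qed
  define Rm where "Rm = c2 * pi powr q"
  have IRm: "I x \<le> Rm" for x
  proof -
    obtain y where y: "- pi \<le> y" "y \<le> pi" "I x = I y" using periodic_reduce[of I, OF I_per, of x] by blast
    have "(pi - \<bar>y\<bar>) powr q \<le> pi powr q" using y pq by (intro powr_mono2) auto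
    then have "c2 * (pi - \<bar>y\<bar>) powr q \<le> Rm" unfolding Rm_def using cs by (intro mult_left_mono) auto
    then show ?thesis using I_bounds[OF y(1,2)] y(3) by linarith
  qed
  have Ane: "A \<noteq> {}"
  proof
    assume "A = {}"
    then show False using A_mass \<rho> cs by (simp add: divide_less_0_iff)
  qed
  have Npos: "N > 0" using Ane AB by (cases N) auto
  have finB: "finite B" using AB finite_subset by blast
  have Bne: "B \<noteq> {}" using Ane AB by blast
  define Mx where "Mx = Max ((\<lambda>i. \<bar>\<omega> i\<bar>) ` B)"
  have om: "\<bar>\<omega> i\<bar> \<le> Mx" if "i \<in> B" for i
    unfolding Mx_def using finB that by (intro Max_ge) auto
  have Mx0: "0 \<le> Mx"
  proof -
    obtain b where "b \<in> B" using Bne by blast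
    then have "\<bar>\<omega> b\<bar> \<le> Mx" by (rule om)
    then show ?thesis by simp
  qed
  have pa: "(pi - \<alpha>0) powr p > 0" using \<alpha>0 by simp
  have Dpos: "\<rho> * c1 * (pi - \<alpha>0) powr p > 0" using \<rho> cs pa by simp
  have kgt: "\<kappa> * (\<rho> * c1 * (pi - \<alpha>0) powr p) > Mx"
    using \<kappa>[folded Mx_def] Dpos by (simp add: pos_divide_less_eq)
  have kpos: "\<kappa> > 0"
  proof -
    have "Mx / (\<rho> * c1 * (pi - \<alpha>0) powr p) \<ge> 0" using Mx0 Dpos by simp
    then show ?thesis using \<kappa>[folded Mx_def] by linarith
  qed
  define X where "X = Mx / (\<kappa> * \<rho> * c1)"
  define d where "d = X powr (1 / p)"
  have dexpr: "(Max ((\<lambda>i. \<bar>\<omega> i\<bar>) ` B) / (\<kappa> * \<rho> * c1)) powr (1 / p) = d"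
    by (simp add: d_def X_def Mx_def)
  have kpc: "\<kappa> * \<rho> * c1 > 0" using kpos \<rho> cs by simp
  have X0: "0 \<le> X" using Mx0 kpc by (simp add: X_def)
  have Xle: "X \<le> (pi - \<alpha>0) powr p"
    using kgt kpc by (simp add: X_def pos_divide_le_eq algebra_simps)
  have d0: "0 \<le> d" by (simp add: d_def)
  have dle: "d \<le> pi - \<alpha>0"
  proof -
    have "d \<le> ((pi - \<alpha>0) powr p) powr (1 / p)" unfolding d_def using X0 Xle pq by (intro powr_mono2) auto
    also have "\<dots> = pi - \<alpha>0" using pq \<alpha>0 by (simp add: powr_powr)
    finally show ?thesis .
  qed
  have dp: "\<kappa> * \<rho> * c1 * d powr p = Mx"
  proof -
    have "d powr p = X" unfolding d_def using pq X0 by (simp add: powr_powr powr_one)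
    moreover have "\<kappa> * \<rho> * c1 * X = Mx" unfolding X_def using kpc by (metis less_irrefl times_divide_eq_right nonzero_mult_div_cancel_left)
    ultimately show ?thesis by simp
  qed
  define R where "R t = 1 / real N * (\<Sum>j\<in>{1..N}. I (\<theta> j t))" for t
  have R0: "0 \<le> R t" for t unfolding R_def using I0 by (simp add: sum_nonneg)
  have RRm: "R t \<le> Rm" for t
  proof -
    have "(\<Sum>j\<in>{1..N}. I (\<theta> j t)) \<le> (\<Sum>j\<in>{1..N}. Rm)" using IRm by (intro sum_mono) auto
    then show ?thesis using Npos by (simp add: R_def field_simps)
  qed
  have deriv: "(\<theta> i has_real_derivative (\<omega> i + \<kappa> * R t * S (\<theta> i t))) (at t within {0..})"
    if "i \<in> {1..N}" "t \<ge> 0" for i t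
  proof -
    have "\<kappa> / real N * (\<Sum>j\<in>{1..N}. I (\<theta> j t)) = \<kappa> * R t" by (simp add: R_def)
    then show ?thesis using ode[OF that] by simp
  qed
  have thcont: "continuous_on {0..} (\<theta> i)" if "i \<in> {1..N}" for i
    using deriv[OF that] by (metis DERIV_continuous atLeast_iff continuous_on_eq_continuous_within)
  have Rcont: "continuous_on {0..} R"
    unfolding R_def
    by (intro continuous_intros continuous_on_compose2[OF Icont] thcont) auto
  define C where "C = \<kappa> * Rm * LS"
  have C0: "C \<ge> 0" unfolding C_def using kpos LS0 IRm[of 0] I0[of 0] by simp
  have keyU: "\<omega> i + \<kappa> * R t * S (\<theta> i t) \<le> C * (\<theta> i t - c)"
    if "\<omega> i + \<kappa> * R t * S c \<le> 0" "\<theta> i t \<ge> c" for i t c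
  proof -
    have "S (\<theta> i t) \<le> S c + LS * (\<theta> i t - c)" using Slip[of "\<theta> i t" c] that by (simp add: abs_le_iff)
    then have "\<kappa> * R t * S (\<theta> i t) \<le> \<kappa> * R t * (S c + LS * (\<theta> i t - c))"
      using kpos R0 by (intro mult_left_mono) auto
    moreover have "(\<kappa> * R t) * (LS * (\<theta> i t - c)) \<le> (\<kappa> * Rm) * (LS * (\<theta> i t - c))"
      using kpos RRm LS0 that by (intro mult_right_mono) auto
    ultimately show ?thesis using that(1) unfolding C_def by (simp add: algebra_simps)
  qed
  have keyL: "\<omega> i + \<kappa> * R t * S (\<theta> i t) \<ge> C * (\<theta> i t - c)"
    if "\<omega> i + \<kappa> * R t * S c \<ge> 0" "\<theta> i t \<le> c" for i t c
  proof -
    have "S (\<theta> i t) \<ge> S c - LS * (c - \<theta> i t)" using Slip[of c "\<theta> i t"] that by (simp add: abs_le_iff)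
    then have "\<kappa> * R t * S (\<theta> i t) \<ge> \<kappa> * R t * (S c - LS * (c - \<theta> i t))"
      using kpos R0 by (intro mult_left_mono) auto
    moreover have "(\<kappa> * R t) * (LS * (c - \<theta> i t)) \<le> (\<kappa> * Rm) * (LS * (c - \<theta> i t))"
      using kpos RRm LS0 that by (intro mult_right_mono) auto
    ultimately show ?thesis using that(1) unfolding C_def by (simp add: algebra_simps)
  qed
  define m where "m i = max \<bar>\<theta>0 i\<bar> \<alpha>0" for i
  have th0r: "- pi + d \<le> \<theta>0 i \<and> \<theta>0 i \<le> pi - d" if "i \<in> A" for i
    using A_init[OF that] dexpr by simp
  have mb: "\<alpha>0 \<le> m i" "m i \<le> pi - d" "\<bar>\<theta>0 i\<bar> \<le> m i" if "i \<in> A" for i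
    using th0r[OF that] dle by (auto simp: m_def)
  have iB: "i \<in> B" if "i \<in> A" for i using that AB by blast
  have iN: "i \<in> {1..N}" if "i \<in> B" for i using that AB by blast
  have dpow: "d powr p \<le> (pi - m i) powr p" if "i \<in> A" for i
    using mb[OF that] pq d0 by (intro powr_mono2) auto
  have kcd0: "0 \<le> \<kappa> * c1 * d powr p" using kpos cs by simp
  have rhoMx: "\<rho> * (\<kappa> * c1 * d powr p) = Mx" using dp by (simp add: mult_ac)
  have condUm: "\<omega> i + \<kappa> * R t * S (m i) \<le> 0" if i: "i \<in> A" and Rt: "R t \<ge> \<rho>" for i t
  proof -
    have "S (m i) \<le> - c1 * (pi - m i) powr p" using S_right mb[OF i] d0 by auto
    moreover have "c1 * d powr p \<le> c1 * (pi - m i) powr p" using dpow[OF i] cs by simp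
    ultimately have Sm: "S (m i) \<le> - (c1 * d powr p)" by simp
    have "\<kappa> * R t * S (m i) \<le> \<kappa> * R t * (- (c1 * d powr p))"
      using kpos R0[of t] Sm by (intro mult_left_mono) auto
    also have "\<dots> = - (R t * (\<kappa> * c1 * d powr p))" by (simp add: algebra_simps)
    also have "\<dots> \<le> - (\<rho> * (\<kappa> * c1 * d powr p))" using Rt kcd0 by (simp add: mult_right_mono)
    finally show ?thesis using rhoMx om[OF iB[OF i]] by simp
  qed
  have condLm: "\<omega> i + \<kappa> * R t * S (- m i) \<ge> 0" if i: "i \<in> A" and Rt: "R t \<ge> \<rho>" for i t
  proof -
    have "S (- m i) \<ge> c1 * (- m i + pi) powr p" using S_left[of "- m i"] mb[OF i] d0 by auto
    moreover have "c1 * d powr p \<le> c1 * (pi - m i) powr p" using dpow[OF i] cs by simp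
    ultimately have Sm: "S (- m i) \<ge> c1 * d powr p" by simp
    have "\<kappa> * R t * S (- m i) \<ge> \<kappa> * R t * (c1 * d powr p)"
      using kpos R0[of t] Sm by (intro mult_left_mono) auto
    moreover have "\<kappa> * R t * (c1 * d powr p) = R t * (\<kappa> * c1 * d powr p)" by (simp add: algebra_simps)
    moreover have "R t * (\<kappa> * c1 * d powr p) \<ge> \<rho> * (\<kappa> * c1 * d powr p)" using Rt kcd0 by (simp add: mult_right_mono)
    ultimately show ?thesis using rhoMx om[OF iB[OF i]] by (simp add: abs_le_iff)
  qed
  define P where "P t = (\<forall>i\<in>A. \<bar>\<theta> i t\<bar> \<le> m i)" for t
  have PR: "R t > \<rho>" if "P t" for t
  proof -
    have "(\<Sum>j\<in>A. c3 * I (\<theta>0 j)) \<le> (\<Sum>j\<in>A. I (\<theta> j t))"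
    proof (rule sum_mono)
      fix j assume j: "j \<in> A"
      show "c3 * I (\<theta>0 j) \<le> I (\<theta> j t)"
        using I_min[of "\<theta>0 j" "\<theta> j t"] th0r[OF j] d0 that j by (auto simp: P_def m_def)
    qed
    also have "\<dots> \<le> (\<Sum>j\<in>{1..N}. I (\<theta> j t))" by (rule sum_mono2) (use AB I0 in auto)
    finally have "c3 * (\<Sum>j\<in>A. I (\<theta>0 j)) \<le> (\<Sum>j\<in>{1..N}. I (\<theta> j t))" by (simp add: sum_distrib_left)
    then have "1 / real N * (c3 * (\<Sum>j\<in>A. I (\<theta>0 j))) \<le> R t"
      unfolding R_def by (intro mult_left_mono) auto
    moreover have "c3 * (1 / real N * (\<Sum>j\<in>A. I (\<theta>0 j))) > c3 * (\<rho> / c3)"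
      using A_mass cs by (intro mult_strict_left_mono) auto
    ultimately show ?thesis using cs by (simp add: mult_ac)
  qed
  have Pall: "P t" if "t \<ge> 0" for t
  proof (rule ccontr)
    assume nP: "\<not> P t"
    define Z where "Z = {t. t \<ge> 0 \<and> \<not> P t}"
    define T where "T = Inf Z"
    have Zne: "Z \<noteq> {}" using that nP by (auto simp: Z_def)
    have Zb: "bdd_below Z" by (auto simp: Z_def bdd_below_def)
    have T0: "T \<ge> 0" unfolding T_def using Zne by (intro cInf_greatest) (auto simp: Z_def)
    have before: "P s" if "0 \<le> s" "s < T" for s
    proof (rule ccontr)
      assume "\<not> P s" then have "s \<in> Z" using that by (simp add: Z_def)
      then have "T \<le> s" unfolding T_def using Zb by (rule cInf_lower)
      then show False using that by simp
    qed
    have PT: "P T"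
      unfolding P_def
    proof
      fix i assume i: "i \<in> A"
      show "\<bar>\<theta> i T\<bar> \<le> m i"
      proof (rule ccontr)
        assume a: "\<not> \<bar>\<theta> i T\<bar> \<le> m i"
        show False
        proof (cases "T = 0")
          case True then show False using a init mb i iN iB by auto
        next
          case False
          have cT: "continuous (at T within {0..}) (\<theta> i)"
            using thcont[OF iN[OF iB[OF i]]] T0 continuous_on_eq_continuous_within by blast
          have posT: "\<bar>\<theta> i T\<bar> - m i > 0" using a by simp
          have "\<exists>\<delta>>0. \<forall>x\<in>{0..}. dist x T < \<delta> \<longrightarrow> dist (\<theta> i x) (\<theta> i T) < \<bar>\<theta> i T\<bar> - m i"
            using cT posT unfolding continuous_within_eps_delta by blast
          then obtain \<delta> where \<delta>: "\<delta> > 0"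
            "\<And>x. x \<in> {0..} \<Longrightarrow> dist x T < \<delta> \<Longrightarrow> dist (\<theta> i x) (\<theta> i T) < \<bar>\<theta> i T\<bar> - m i"
            by blast
          define s where "s = max 0 (T - \<delta>/2)"
          have s: "0 \<le> s" "s < T" "dist s T < \<delta>" using \<delta> False T0 by (auto simp: s_def dist_real_def)
          then have "\<bar>\<theta> i s\<bar> \<le> m i" "dist (\<theta> i s) (\<theta> i T) < \<bar>\<theta> i T\<bar> - m i"
            using before[OF s(1,2)] \<delta>(2)[of s] i by (auto simp: P_def)
          then show False unfolding dist_real_def by arith
        qed
      qed
    qed
    have RT: "R T > \<rho>" using PR PT by blast
    have cR: "continuous (at T within {0..}) R"
      using Rcont T0 continuous_on_eq_continuous_within by blast
    have posR: "R T - \<rho> > 0" using RT by simp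
    have "\<exists>\<delta>>0. \<forall>x\<in>{0..}. dist x T < \<delta> \<longrightarrow> dist (R x) (R T) < R T - \<rho>"
      using cR posR unfolding continuous_within_eps_delta by blast
    then obtain \<delta> where \<delta>: "\<delta> > 0"
      "\<And>x. x \<in> {0..} \<Longrightarrow> dist x T < \<delta> \<Longrightarrow> dist (R x) (R T) < R T - \<rho>"
      by blast
    define T2 where "T2 = T + \<delta>/2"
    have Rgt: "R x \<ge> \<rho>" if "T \<le> x" "x \<le> T2" for x
    proof -
      have "dist (R x) (R T) < R T - \<rho>" using \<delta> that T0 by (intro \<delta>(2)) (auto simp: T2_def dist_real_def)
      then show ?thesis unfolding dist_real_def by arith
    qed
    have Pint: "P x" if x: "T \<le> x" "x \<le> T2" for x
      unfolding P_def
    proof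
      fix i assume i: "i \<in> A"
      have dd: "(\<theta> i has_real_derivative (\<omega> i + \<kappa> * R u * S (\<theta> i u))) (at u within {T..T2})"
        if "T \<le> u" "u \<le> T2" for u
      proof -
        have "u \<ge> 0" using that T0 by simp
        then have "(\<theta> i has_real_derivative (\<omega> i + \<kappa> * R u * S (\<theta> i u))) (at u within {0..})"
          using deriv[OF iN[OF iB[OF i]]] by blast
        moreover have "{T..T2} \<subseteq> {0..}" using T0 by auto
        ultimately show ?thesis by (rule DERIV_subset)
      qed
      have "\<theta> i x \<le> m i"
      proof (rule gronwall_barrier[where f="\<theta> i" and c="m i", OF dd C0 _ _ x])
        show "\<omega> i + \<kappa> * R u * S (\<theta> i u) \<le> C * (\<theta> i u - m i)"
          if "T \<le> u" "u \<le> T2" "m i \<le> \<theta> i u" for u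
          using keyU[OF condUm[OF i Rgt[OF that(1,2)]] that(3)] .
        show "\<theta> i T \<le> m i" using PT i by (auto simp: P_def)
      qed
      moreover have "\<theta> i x \<ge> - m i"
      proof (rule gronwall_barrier_below[where f="\<theta> i" and c="- m i", OF dd C0 _ _ x])
        show "\<omega> i + \<kappa> * R u * S (\<theta> i u) \<ge> C * (\<theta> i u - - m i)"
          if "T \<le> u" "u \<le> T2" "\<theta> i u \<le> - m i" for u
          using keyL[OF condLm[OF i Rgt[OF that(1,2)]] that(3)] by simp
        show "\<theta> i T \<ge> - m i" using PT i by (auto simp: P_def)
      qed
      ultimately show "\<bar>\<theta> i x\<bar> \<le> m i" by simp
    qed
    have "T < T2" using \<delta> by (simp add: T2_def)
    then obtain z where z: "z \<in> Z" "z < T2" using cInf_less_iff[OF Zne Zb] unfolding T_def by auto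
    moreover have "T \<le> z" unfolding T_def using z(1) Zb by (rule cInf_lower)
    ultimately show False using Pint by (auto simp: Z_def)
  qed
  have partA: "\<forall>t\<ge>0. R t > \<rho>" using Pall PR by blast
  have partB: "\<forall>i\<in>A. \<forall>t\<ge>0. - pi + d \<le> \<theta> i t \<and> \<theta> i t \<le> pi - d"
  proof (intro ballI allI impI)
    fix i t assume i: "i \<in> A" and t: "(t::real) \<ge> 0"
    have "\<bar>\<theta> i t\<bar> \<le> m i" using Pall[OF t] i by (simp add: P_def)
    then show "- pi + d \<le> \<theta> i t \<and> \<theta> i t \<le> pi - d" using mb(2)[OF i] by (simp add: abs_le_iff)
  qed
  have partC: "\<exists>a b. b - a < 2 * pi \<and> (\<forall>t\<ge>0. a \<le> \<theta> i t \<and> \<theta> i t \<le> b)" if i: "i \<in> B" for i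
  proof -
    have iN': "i \<in> {1..N}" using iN[OF i] .
    define U where "U k = \<alpha>0 + 2 * pi * of_int k" for k :: int
    define L where "L k = - \<alpha>0 + 2 * pi * of_int k" for k :: int
    have kbig: "\<kappa> * R t * (c1 * (pi - \<alpha>0) powr p) > Mx" if t: "t \<ge> 0" for t
    proof -
      have X0': "0 \<le> \<kappa> * c1 * (pi - \<alpha>0) powr p" using kpos cs pa by simp
      have "\<rho> * (\<kappa> * c1 * (pi - \<alpha>0) powr p) \<le> R t * (\<kappa> * c1 * (pi - \<alpha>0) powr p)"
        using partA t X0' by (intro mult_right_mono) auto
      moreover have "\<rho> * (\<kappa> * c1 * (pi - \<alpha>0) powr p) = \<kappa> * (\<rho> * c1 * (pi - \<alpha>0) powr p)" by (simp add: mult_ac)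
      moreover have "\<kappa> * R t * (c1 * (pi - \<alpha>0) powr p) = R t * (\<kappa> * c1 * (pi - \<alpha>0) powr p)" by (simp add: mult_ac)
      ultimately show ?thesis using kgt by linarith
    qed
    have condU: "\<omega> i + \<kappa> * R t * S (U k) \<le> 0" if t: "t \<ge> 0" for t k
    proof -
      have "S (U k) = S \<alpha>0" unfolding U_def by (rule Sper)
      moreover have "S \<alpha>0 \<le> - c1 * (pi - \<alpha>0) powr p" using S_right[of \<alpha>0] \<alpha>0 by simp
      ultimately have "\<kappa> * R t * S (U k) \<le> \<kappa> * R t * (- c1 * (pi - \<alpha>0) powr p)"
        using kpos R0[of t] by (intro mult_left_mono) auto
      then show ?thesis using kbig[OF t] om[OF i] by (simp add: abs_le_iff)
    qed
    have condL: "\<omega> i + \<kappa> * R t * S (L k) \<ge> 0" if t: "t \<ge> 0" for t k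
    proof -
      have "S (L k) = S (- \<alpha>0)" unfolding L_def by (rule Sper)
      moreover have "S (- \<alpha>0) \<ge> c1 * (pi - \<alpha>0) powr p" using S_left[of "- \<alpha>0"] \<alpha>0 by simp
      ultimately have "\<kappa> * R t * S (L k) \<ge> \<kappa> * R t * (c1 * (pi - \<alpha>0) powr p)"
        using kpos R0[of t] by (intro mult_left_mono) auto
      then show ?thesis using kbig[OF t] om[OF i] by (simp add: abs_le_iff)
    qed
    have dd: "(\<theta> i has_real_derivative (\<omega> i + \<kappa> * R u * S (\<theta> i u))) (at u within {t0..t2})"
      if "0 \<le> t0" "t0 \<le> u" for t0 t2 u
    proof -
      have "u \<ge> 0" using that by simp
      then have "(\<theta> i has_real_derivative (\<omega> i + \<kappa> * R u * S (\<theta> i u))) (at u within {0..})"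
        using deriv[OF iN'] by blast
      moreover have "{t0..t2} \<subseteq> {0..}" using that by auto
      ultimately show ?thesis by (rule DERIV_subset)
    qed
    have barU: "\<theta> i t \<le> U k" if "0 \<le> t0" "t0 \<le> t" "\<theta> i t0 \<le> U k" for t0 t k
    proof (rule gronwall_barrier[where f="\<theta> i" and c="U k", OF _ C0 _ that(3) that(2) order_refl])
      show "(\<theta> i has_real_derivative (\<omega> i + \<kappa> * R u * S (\<theta> i u))) (at u within {t0..t})"
        if "t0 \<le> u" "u \<le> t" for u using dd that \<open>0 \<le> t0\<close> by blast
      show "\<omega> i + \<kappa> * R u * S (\<theta> i u) \<le> C * (\<theta> i u - U k)"
        if "t0 \<le> u" "u \<le> t" "U k \<le> \<theta> i u" for u
        using keyU[OF condU that(3)] that \<open>0 \<le> t0\<close> by simp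
    qed
    have barL: "\<theta> i t \<ge> L k" if "0 \<le> t0" "t0 \<le> t" "\<theta> i t0 \<ge> L k" for t0 t k
    proof (rule gronwall_barrier_below[where f="\<theta> i" and c="L k", OF _ C0 _ that(3) that(2) order_refl])
      show "(\<theta> i has_real_derivative (\<omega> i + \<kappa> * R u * S (\<theta> i u))) (at u within {t0..t})"
        if "t0 \<le> u" "u \<le> t" for u using dd that \<open>0 \<le> t0\<close> by blast
      show "\<omega> i + \<kappa> * R u * S (\<theta> i u) \<ge> C * (\<theta> i u - L k)"
        if "t0 \<le> u" "u \<le> t" "\<theta> i u \<le> L k" for u
        using keyL[OF condL that(3)] that \<open>0 \<le> t0\<close> by simp
    qed
    have contc: "continuous_on {0..t0} (\<theta> i)" for t0
      using thcont[OF iN'] by (rule continuous_on_subset) auto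
    define x where "x = \<theta> i 0"
    define k where "k = \<lfloor>(x + \<alpha>0) / (2 * pi)\<rfloor>"
    have k: "of_int k \<le> (x + \<alpha>0) / (2 * pi)" "(x + \<alpha>0) / (2 * pi) < of_int k + 1"
      unfolding k_def by linarith+
    have Lk: "L k \<le> x" using k(1) by (simp add: L_def field_simps)
    have Lk1: "x < L (k + 1)" using k(2) by (simp add: L_def field_simps)
    have UL: "U k < L (k + 1)" "L (k + 1) < U (k + 1)" "U (k + 1) - U k = 2 * pi"
      "L (k + 1) - L k = 2 * pi" "U k - L k < 2 * pi" "L (k + 1) - U k < 2 * pi"
      using \<alpha>0 by (simp_all add: U_def L_def algebra_simps)
    have low: "L k \<le> \<theta> i t" if "t \<ge> 0" for t using barL[of 0 t k] that Lk by (simp add: x_def)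
    show ?thesis
    proof (cases "x \<le> U k")
      case True
      have "\<theta> i t \<le> U k" if "t \<ge> 0" for t using barU[of 0 t k] that True by (simp add: x_def)
      then show ?thesis using low UL by blast
    next
      case xU: False
      show ?thesis
      proof (cases "\<exists>t0\<ge>0. \<theta> i t0 \<le> U k")
        case True
        then obtain t0 where t0: "t0 \<ge> 0" "\<theta> i t0 \<le> U k" by blast
        obtain smax where smax: "smax \<in> {0..t0}" "\<And>y. y \<in> {0..t0} \<Longrightarrow> \<theta> i y \<le> \<theta> i smax"
          using continuous_attains_sup[OF compact_Icc _ contc[of t0]] t0 by auto
        have "\<theta> i smax < L (k + 1)"
        proof (rule ccontr)
          assume "\<not> \<theta> i smax < L (k + 1)"
          then have "\<theta> i t0 \<ge> L (k + 1)" using barL[of smax t0 "k + 1"] smax by auto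
          then show False using t0 UL by simp
        qed
        moreover have "x \<le> \<theta> i smax" using smax(2)[of 0] t0 by (simp add: x_def)
        moreover have "\<theta> i t \<le> \<theta> i smax" if "t \<ge> 0" for t
        proof (cases "t \<le> t0")
          case True then show ?thesis using smax(2)[of t] that by simp
        next
          case False then have "\<theta> i t \<le> U k" using barU[of t0 t k] t0 by simp
          then show ?thesis using xU \<open>x \<le> \<theta> i smax\<close> by simp
        qed
        ultimately show ?thesis using low UL by (intro exI[of _ "L k"] exI[of _ "\<theta> i smax"]) auto
      next
        case nU: False
        have up: "\<theta> i t \<le> U (k + 1)" if "t \<ge> 0" for t
          using barU[of 0 t "k + 1"] that Lk1 UL by (simp add: x_def)
        show ?thesis
        proof (cases "\<exists>t0\<ge>0. \<theta> i t0 \<ge> L (k + 1)")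
          case True
          then obtain t0 where t0: "t0 \<ge> 0" "\<theta> i t0 \<ge> L (k + 1)" by blast
          obtain smin where smin: "smin \<in> {0..t0}" "\<And>y. y \<in> {0..t0} \<Longrightarrow> \<theta> i smin \<le> \<theta> i y"
            using continuous_attains_inf[OF compact_Icc _ contc[of t0]] t0 by auto
          have "\<theta> i smin > U k" using nU smin by auto
          moreover have "\<theta> i smin \<le> x" using smin(2)[of 0] t0 by (simp add: x_def)
          moreover have "\<theta> i smin \<le> \<theta> i t" if "t \<ge> 0" for t
          proof (cases "t \<le> t0")
            case True then show ?thesis using smin(2)[of t] that by simp
          next
            case False then have "\<theta> i t \<ge> L (k + 1)" using barL[of t0 t "k + 1"] t0 by simp
            then show ?thesis using Lk1 \<open>\<theta> i smin \<le> x\<close> by simp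
          qed
          ultimately show ?thesis using up UL by (intro exI[of _ "\<theta> i smin"] exI[of _ "U (k + 1)"]) auto
        next
          case False
          then have "\<theta> i t < L (k + 1)" "\<theta> i t > U k" if "t \<ge> 0" for t using nU that by auto
          then show ?thesis using UL by (intro exI[of _ "U k"] exI[of _ "L (k + 1)"]) force
        qed
      qed
    qed
  qed
  have partC': "bdd_above (\<theta> i ` {0..}) \<and> bdd_below (\<theta> i ` {0..}) \<and>
            (SUP t\<in>{0..}. \<theta> i t) - (INF t\<in>{0..}. \<theta> i t) < 2 * pi" if i: "i \<in> B" for i
  proof -
    obtain a b where ab: "b - a < 2 * pi" "\<And>t. t \<ge> 0 \<Longrightarrow> a \<le> \<theta> i t \<and> \<theta> i t \<le> b"
      using partC[OF i] by blast
    have "bdd_above (\<theta> i ` {0..})" using ab by (auto simp: bdd_above_def)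
    moreover have "bdd_below (\<theta> i ` {0..})" using ab by (auto simp: bdd_below_def)
    moreover have "(SUP t\<in>{0..}. \<theta> i t) \<le> b" using ab by (intro cSUP_least) auto
    moreover have "a \<le> (INF t\<in>{0..}. \<theta> i t)" using ab by (intro cINF_greatest) auto
    ultimately show ?thesis using ab(1) by linarith
  qed
  have partA': "\<forall>t\<ge>0. (1 / real N) * (\<Sum>j\<in>{1..N}. I (\<theta> j t)) > \<rho>"
  proof (intro allI impI)
    fix t :: real assume "t \<ge> 0"
    then have "R t > \<rho>" using partA by blast
    then show "(1 / real N) * (\<Sum>j\<in>{1..N}. I (\<theta> j t)) > \<rho>" by (simp only: R_def)
  qed
  have partC'': "\<forall>i\<in>B. bdd_above (\<theta> i ` {0..}) \<and> bdd_below (\<theta> i ` {0..}) \<and>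
            (SUP t\<in>{0..}. \<theta> i t) - (INF t\<in>{0..}. \<theta> i t) < 2 * pi"
    by (intro ballI partC')
  have partB': "\<forall>i\<in>A. \<forall>t\<ge>0.
            - pi + (Max ((\<lambda>i. \<bar>\<omega> i\<bar>) ` B) / (\<kappa> * \<rho> * c1)) powr (1 / p) \<le> \<theta> i t \<and>
            \<theta> i t \<le> pi - (Max ((\<lambda>i. \<bar>\<omega> i\<bar>) ` B) / (\<kappa> * \<rho> * c1)) powr (1 / p)"
    unfolding dexpr by (rule partB)
  show ?thesis by (intro conjI partA' partB' partC'')
qed

end
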